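(* Let $c\ge1$ be an integer and let $p_{+c}$ denote the perturbed collection of p-values produced from $p$ by the procedure INCREASE-c. Then, for any collection of alternative distributions $\{\mathbb P^1_i\}_{i\in\mathcal H_1}$, $$\mathbb E\,\mathrm{FDP}[BH_q;p_{+c}]=\mathbb E\,\mathrm{FDP}[BH_q;p]+\Delta_c,\qquad\text{where }\ \Delta_c:=\mathbb E\Big[\frac{c}{\tilde k_{+c}};\,B^0_{N+1}\ge c\Big].$$
   Context: Setting: $N\ge 1$ tests indexed by $\mathcal N=\{1,\dots,N\}=\mathcal H_0\sqcup\mathcal H_1$ (null and alternative indices), $N_0=|\mathcal H_0|$, $N_1=|\mathcal H_1|$. The p-values $p=(p_i)_{i\in\mathcal N}$ are jointly independent, with $p_i\sim U(0,1)$ for $i\in\mathcal H_0$ and $p_i\sim\mathbb P^1_i$ (an arbitrary distribution on $[0,1]$) for $i\in\mathcal H_1$. Fix $q\in(0,1)$. Bins: $B_i=\{x:(i-1)q/N\le x<iq/N\}$ for $i=1,\dots,N$, and $B_{N+1}=[q,1]$. For a collection of values $x=(x_i)_{i\in\mathcal N}\in[0,1]^N$, loads are $B^0_i=|\{j\in\mathcal H_0:x_j\in B_i\}|$, $B^{\mathcal N}_i=|\{j\in\mathcal N:x_j\in B_i\}|$, $B^{\ast}_{a:b}=\sum_{l=a}^b B^\ast_l$, $B^\ast_{1:0}=0$; unless stated otherwise loads refer to $x=p$. The Benjamini–Hochberg procedure $BH_q$ applied to $x$ computes the rejection count $\tilde k(x)=\max\{i\in\{0,\dots,N\}:B^{\mathcal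 N}_{1:i}=i\}$ and rejects exactly the tests $j$ with $x_j\in B_1\cup\dots\cup B_{\tilde k(x)}$; its false detection proportion is $\mathrm{FDP}[BH_q;x]=B^0_{1:\tilde k(x)}/\max(\tilde k(x),1)$. Write $\tilde k=\tilde k(p)$, and $\tilde k_{+c}=\max\{i\in\{c,\dots,N\}:B^{\mathcal N}_{1:i}=i-c\}$ if $B^0_{N+1}\ge c$, $\tilde k_{+c}=\tilde k$ otherwise (loads of $p$). INCREASE-c: if $B^0_{N+1}\ge c$, take the $c$ largest null p-values lying in $B_{N+1}$ (ties broken arbitrarily) and change each of them to a value in bin $B_{\tilde k_{+c}}$, leaving all other p-values unchanged; otherwise leave $p$ unchanged. The result is $p_{+c}$. $\mathbb E[X;A]=\mathbb E[X\mathbf 1_A]$. *)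

theory Defs
  imports "HOL-Probability.Probability"
begin

text \<open>Bins: for 1 \<le> i \<le> N, B_i = [(i-1)q/N, iq/N); B_{N+1} = [q,1].
  Values are indexed by {1..N}; a collection of p-values is a function nat \<Rightarrow> real,
  only its values on {1..N} matter.\<close>

definition in_bin :: "real \<Rightarrow> nat \<Rightarrow> nat \<Rightarrow> real \<Rightarrow> bool" where
  "in_bin q N i y =
     (if i = N + 1 then q \<le> y \<and> y \<le> 1
      else 1 \<le> i \<and> i \<le> N \<and> real (i - 1) * q / real N \<le> y \<and> y < real i * q / real N)"

text \<open>Load of bin i restricted to index set S (S = H0 gives B^0_i, S = {1..N} gives B^N_i).\<close>
definition load :: "real \<Rightarrow> nat \<Rightarrow> nat set \<Rightarrow> (nat \<Rightarrow> real) \<Rightarrow> nat \<Rightarrow> nat" where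
  "load q N S x i = card {j \<in> S. in_bin q N i (x j)}"

text \<open>Cumulative load B_{a:b} (empty sum = 0, in particular B_{1:0} = 0).\<close>
definition load_range :: "real \<Rightarrow> nat \<Rightarrow> nat set \<Rightarrow> (nat \<Rightarrow> real) \<Rightarrow> nat \<Rightarrow> nat \<Rightarrow> nat" where
  "load_range q N S x a b = (\<Sum>l = a..b. load q N S x l)"

definition k_BH :: "real \<Rightarrow> nat \<Rightarrow> (nat \<Rightarrow> real) \<Rightarrow> nat" where
  "k_BH q N x = Max {i \<in> {0..N}. load_range q N {1..N} x 1 i = i}"

definition FDP_BH :: "real \<Rightarrow> nat \<Rightarrow> nat set \<Rightarrow> (nat \<Rightarrow> real) \<Rightarrow> real" where
  "FDP_BH q N H0 x =
     real (load_range q N H0 x 1 (k_BH q N x)) / real (max (k_BH q N x) 1)"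

definition k_plus :: "real \<Rightarrow> nat \<Rightarrow> nat set \<Rightarrow> nat \<Rightarrow> (nat \<Rightarrow> real) \<Rightarrow> nat" where
  "k_plus q N H0 c x =
     (if load q N H0 x (N + 1) \<ge> c
      then Max {i \<in> {c..N}. load_range q N {1..N} x 1 i = i - c}
      else k_BH q N x)"

text \<open>y is a possible outcome of INCREASE-c applied to x (any tie-breaking among the
  null values in B_{N+1}, any new values in bin B_{k_plus}).\<close>
definition is_increase :: "real \<Rightarrow> nat \<Rightarrow> nat set \<Rightarrow> nat \<Rightarrow> (nat \<Rightarrow> real) \<Rightarrow> (nat \<Rightarrow> real) \<Rightarrow> bool" where
  "is_increase q N H0 c x y =
     (if load q N H0 x (N + 1) \<ge> c then
        (\<exists>S. S \<subseteq> {j \<in> H0. in_bin q N (N + 1) (x j)} \<and> card S = c \<and>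
             (\<forall>j\<in>S. \<forall>j'\<in>{j \<in> H0. in_bin q N (N + 1) (x j)} - S. x j' \<le> x j) \<and>
             (\<forall>j\<in>S. in_bin q N (k_plus q N H0 c x) (y j)) \<and>
             (\<forall>j\<in>{1..N} - S. y j = x j))
      else (\<forall>j\<in>{1..N}. y j = x j))"

end

theory Submission
  imports Defs
begin


declare One_nat_def[simp del]

lemma ivt:
  fixes f :: "nat \<Rightarrow> int"
  assumes "\<forall>i<b. f (Suc i) \<ge> f i - 1" "f a \<ge> v" "f b \<le> v" "a \<le> b"
  shows "\<exists>i\<in>{a..b}. f i = v"
  using assms
proof (induction b)
  case 0 then show ?case by auto
next
  case (Suc b)
  show ?case
  proof (cases "a = Suc b")
    case True with Suc.prems show ?thesis by auto
  next
    case False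
    then have ab: "a \<le> b" using Suc.prems by auto
    show ?thesis
    proof (cases "f b \<le> v")
      case True
      then obtain i where "i \<in> {a..b}" "f i = v" using Suc.IH[of] Suc.prems ab by auto
      then show ?thesis by auto
    next
      case False
      then have "f (Suc b) = v" using Suc.prems by force
      then show ?thesis using ab by auto
    qed
  qed
qed

locale bhs =
  fixes q :: real and N :: nat and H0 :: "nat set" and c :: nat
  assumes N1: "N \<ge> 1" and H0sub: "H0 \<subseteq> {1..N}" and qpos: "0 < q" and qlt1: "q < 1" and c1: "c \<ge> 1"
begin

definition inlow :: "nat \<Rightarrow> real \<Rightarrow> bool" where
  "inlow k t = (0 \<le> t \<and> t * real N < real k * q)"

definition Ev :: "(nat \<Rightarrow> real) \<Rightarrow> bool" where
  "Ev x = (c \<le> load q N H0 x (N + 1))"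

abbreviation LR where "LR S x k \<equiv> load_range q N S x 1 k"
abbreviation kp where "kp x \<equiv> k_plus q N H0 c x"
abbreviation kt where "kt x \<equiv> k_BH q N x"

lemma Npos: "real N > 0" using N1 by simp

lemma in_bin_iff: "in_bin q N l t = (if l = N + 1 then q \<le> t \<and> t \<le> 1
   else 1 \<le> l \<and> l \<le> N \<and> (real l - 1) * q \<le> t * real N \<and> t * real N < real l * q)"
proof -
  have "real (l - 1) = real l - 1" if "1 \<le> l" using that by simp
  then show ?thesis using Npos unfolding in_bin_def
    by (auto simp: field_simps)
qed

lemma in_bin_range: "in_bin q N l t \<Longrightarrow> 1 \<le> l \<and> l \<le> N + 1"
  unfolding in_bin_def by (auto split: if_splits)

lemma bin_disj: assumes "in_bin q N l t" "in_bin q N l' t" shows "l = l'"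
proof (rule ccontr)
  assume ne: "l \<noteq> l'"
  have key: False if "in_bin q N a t" "in_bin q N b t" "a < b" for a b
  proof (cases "b = N + 1")
    case True
    with that have "a \<le> N" "1 \<le> a" "t * real N < real a * q" "q \<le> t" by (auto simp: in_bin_iff split: if_splits)
    then have "real a * q \<le> real N * q" using qpos by (simp add: mult_right_mono)
    moreover have "q * real N \<le> t * real N" using \<open>q \<le> t\<close> Npos by (simp add: mult_right_mono)
    ultimately show False using \<open>t * real N < real a * q\<close> by (simp add: mult.commute)
  next
    case False
    have "b \<le> N" using in_bin_range[OF that(2)] False by linarith
    then have "a \<noteq> N + 1" using that(3) by linarith
    with that False have "(real b - 1) * q \<le> t * real N" "t * real N < real a * q"
      by (auto simp: in_bin_iff)
    moreover have "real a \<le> real b - 1" using \<open>a < b\<close> by linarith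
    then have "real a * q \<le> (real b - 1) * q" using qpos by (simp add: mult_right_mono)
    ultimately show False by linarith
  qed
  show False using ne key[OF assms] key[OF assms(2,1)] by linarith
qed

lemma LR_Suc: "LR S x (Suc k) = LR S x k + load q N S x (Suc k)"
  unfolding load_range_def by (simp add: sum.cl_ivl_Suc)

lemma LR_Suc0: "load_range q N S x (Suc 0) (Suc k) = load_range q N S x (Suc 0) k + load q N S x (Suc k)"
  unfolding load_range_def by (simp add: sum.cl_ivl_Suc)

lemma LR_0: "LR S x 0 = 0" unfolding load_range_def by simp

lemma LR_card: assumes "finite S"
  shows "LR S x k = card {j\<in>S. \<exists>l\<in>{1..k}. in_bin q N l (x j)}"
proof (induction k)
  case 0 then show ?case by (simp add: load_range_def)
next
  case (Suc k)
  have ins: "{1..Suc k} = insert (Suc k) {1..k}" by auto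
  have eq: "{j\<in>S. \<exists>l\<in>{1..Suc k}. in_bin q N l (x j)} =
        {j\<in>S. \<exists>l\<in>{1..k}. in_bin q N l (x j)} \<union> {j\<in>S. in_bin q N (Suc k) (x j)}"
    unfolding ins by blast
  have disj: "{j\<in>S. \<exists>l\<in>{1..k}. in_bin q N l (x j)} \<inter> {j\<in>S. in_bin q N (Suc k) (x j)} = {}"
    using bin_disj by fastforce
  show ?case unfolding LR_Suc Suc eq load_def
    by (subst card_Un_disjoint) (use assms disj in auto)
qed

lemma inlow_bins: assumes "k \<le> N" shows "(\<exists>l\<in>{1..k}. in_bin q N l t) = inlow k t"
  using assms
proof (induction k)
  case 0 then show ?case using Npos by (auto simp: inlow_def) (meson mult_nonneg_nonneg not_less of_nat_0_le_iff)
next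
  case (Suc k)
  have ins: "{1..Suc k} = insert (Suc k) {1..k}" by auto
  have "(\<exists>l\<in>{1..Suc k}. in_bin q N l t) = ((\<exists>l\<in>{1..k}. in_bin q N l t) \<or> in_bin q N (Suc k) t)"
    unfolding ins by blast
  also have "\<dots> = (inlow k t \<or> in_bin q N (Suc k) t)" using Suc by simp
  also have "\<dots> = inlow (Suc k) t"
  proof -
    have ib: "in_bin q N (Suc k) t = (real k * q \<le> t * real N \<and> t * real N < real k * q + q)"
      using Suc.prems by (simp add: in_bin_iff algebra_simps)
    have nn: "0 \<le> t" if "0 \<le> t * real N" using that Npos by (simp add: zero_le_mult_iff)
    have kq: "0 \<le> real k * q" using qpos by simp
    have il: "inlow (Suc k) t = (0 \<le> t \<and> t * real N < real k * q + q)"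
      unfolding inlow_def by (simp add: algebra_simps)
    show ?thesis unfolding ib il unfolding inlow_def
    proof
      assume "0 \<le> t \<and> t * real N < real k * q \<or> real k * q \<le> t * real N \<and> t * real N < real k * q + q"
      then show "0 \<le> t \<and> t * real N < real k * q + q"
      proof
        assume "real k * q \<le> t * real N \<and> t * real N < real k * q + q"
        then show ?thesis using nn kq by auto
      qed (use qpos in auto)
    next
      assume "0 \<le> t \<and> t * real N < real k * q + q"
      then show "0 \<le> t \<and> t * real N < real k * q \<or> real k * q \<le> t * real N \<and> t * real N < real k * q + q"
        by (cases "t * real N < real k * q") auto
    qed
  qed
  finally show ?case .
qed

lemma LR_inlow: assumes "finite S" "k \<le> N"
  shows "LR S x k = card {j\<in>S. inlow k (x j)}"
  unfolding LR_card[OF assms(1)] inlow_bins[OF assms(2)] ..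


lemma LR_mono: "LR S x i \<le> LR S x (Suc i)" by (simp add: LR_Suc LR_Suc0)

lemma LR_le_card: "finite S \<Longrightarrow> LR S x k \<le> card S"
  by (simp add: LR_card card_mono)

lemma LR_N_plus: "LR {1..N} x N + load q N {1..N} x (N + 1) \<le> N"
proof -
  have "LR {1..N} x (N + 1) \<le> card {1..N}" by (rule LR_le_card) simp
  moreover have "LR {1..N} x (N + 1) = LR {1..N} x N + load q N {1..N} x (N + 1)"
    using LR_Suc[of "{1..N}" x N, unfolded Suc_eq_plus1] .
  ultimately show ?thesis by simp
qed

lemma load_H0_le: "load q N H0 x i \<le> load q N {1..N} x i"
  unfolding load_def using H0sub by (intro card_mono) auto

lemma kp_props: assumes "Ev x"
  shows "c \<le> kp x \<and> kp x \<le> N \<and> LR {1..N} x (kp x) = kp x - c \<and>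
         (\<forall>i. c \<le> i \<longrightarrow> i \<le> N \<longrightarrow> LR {1..N} x i = i - c \<longrightarrow> i \<le> kp x)"
proof -
  define f where "f i = int (LR {1..N} x i) - int i" for i
  have step: "\<forall>i<N. f (Suc i) \<ge> f i - 1" using LR_mono unfolding f_def by (simp add: LR_Suc LR_Suc0)
  have f0: "f 0 \<ge> - int c" unfolding f_def by (simp add: load_range_def)
  have "LR {1..N} x N + c \<le> N" using LR_N_plus[of x] load_H0_le[of x "N+1"] assms unfolding Ev_def by linarith
  then have "int (LR {1..N} x N) + int c \<le> int N" by (simp only: of_nat_add[symmetric] of_nat_le_iff)
  then have fN: "f N \<le> - int c" unfolding f_def by linarith
  obtain i where i: "i \<in> {0..N}" "f i = - int c" using ivt[OF step f0 fN] by auto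
  have ic: "c \<le> i" and LRi: "LR {1..N} x i = i - c" using i unfolding f_def by auto
  define A where "A = {i \<in> {c..N}. LR {1..N} x i = i - c}"
  have fA: "finite A" unfolding A_def by simp
  have "i \<in> A" unfolding A_def using i ic LRi by simp
  then have ne: "A \<noteq> {}" by blast
  have kpA: "kp x = Max A" using assms unfolding k_plus_def A_def Ev_def by simp
  have "Max A \<in> A" using fA ne by (rule Max_in)
  then have 1: "c \<le> Max A" "Max A \<le> N" "LR {1..N} x (Max A) = Max A - c" unfolding A_def by auto
  have 2: "i \<le> Max A" if "c \<le> i" "i \<le> N" "LR {1..N} x i = i - c" for i
    using fA that by (intro Max_ge) (auto simp: A_def)
  show ?thesis unfolding kpA using 1 2 by blast
qed

lemma kt_props:
  shows "kt x \<le> N \<and> LR {1..N} x (kt x) = kt x \<and>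
         (\<forall>i. i \<le> N \<longrightarrow> LR {1..N} x i = i \<longrightarrow> i \<le> kt x)"
proof -
  define A where "A = {i \<in> {0..N}. LR {1..N} x i = i}"
  have fA: "finite A" unfolding A_def by simp
  have "0 \<in> A" unfolding A_def by (simp add: load_range_def)
  then have ne: "A \<noteq> {}" by blast
  have ktA: "kt x = Max A" unfolding k_BH_def A_def by (rule refl)
  have "Max A \<in> A" using fA ne by (rule Max_in)
  then have 1: "Max A \<le> N" "LR {1..N} x (Max A) = Max A" unfolding A_def by auto
  have 2: "i \<le> Max A" if "i \<le> N" "LR {1..N} x i = i" for i
    using fA that by (intro Max_ge) (auto simp: A_def)
  show ?thesis unfolding ktA using 1 2 by blast
qed

lemma kt_pos: assumes "j \<in> {1..N}" "in_bin q N 1 (x j)" shows "1 \<le> kt x"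
proof -
  define f where "f i = int (LR {1..N} x i) - int i" for i
  have step: "\<forall>i<N. f (Suc i) \<ge> f i - 1" using LR_mono unfolding f_def by (simp add: LR_Suc LR_Suc0)
  have "load q N {1..N} x 1 \<ge> 1"
  proof -
    have "{j} \<subseteq> {j \<in> {1..N}. in_bin q N 1 (x j)}" using assms by auto
    then have "card {j} \<le> card {j \<in> {1..N}. in_bin q N 1 (x j)}" by (intro card_mono) auto
    then show ?thesis unfolding load_def by simp
  qed
  then have f1: "f 1 \<ge> 0" unfolding f_def using LR_Suc[of "{1..N}" x 0] by (simp add: load_range_def)
  have "LR {1..N} x N \<le> N" using LR_N_plus[of x] by linarith
  then have fN: "f N \<le> 0" unfolding f_def by simp
  obtain i where i: "i \<in> {1..N}" "f i = 0" using ivt[OF step f1 fN] N1 by auto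
  then have "i \<le> kt x" using kt_props[of x] unfolding f_def by auto
  with i show ?thesis by auto
qed


definition beq :: "(nat \<Rightarrow> real) \<Rightarrow> (nat \<Rightarrow> real) \<Rightarrow> bool" where
  "beq x x' = (\<forall>j\<in>{1..N}. \<forall>i. in_bin q N i (x j) = in_bin q N i (x' j))"

lemma beq_eqon: "(\<forall>i\<in>{1..N}. x i = x' i) \<Longrightarrow> beq x x'"
  unfolding beq_def by simp

lemma load_inv: assumes "S \<subseteq> {1..N}" "beq x x'" shows "load q N S x = load q N S x'"
proof
  fix i
  have "{j \<in> S. in_bin q N i (x j)} = {j \<in> S. in_bin q N i (x' j)}"
    using assms unfolding beq_def by blast
  then show "load q N S x i = load q N S x' i" unfolding load_def by simp
qed

lemma loads_inv: assumes "beq x x'"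
  shows "load q N {1..N} x = load q N {1..N} x'" "load q N H0 x = load q N H0 x'"
  using load_inv[OF _ assms] H0sub by auto

lemma LR_inv: assumes "beq x x'" shows "LR {1..N} x = LR {1..N} x'" "LR H0 x = LR H0 x'"
  unfolding load_range_def[abs_def] loads_inv[OF assms] by auto

lemma kt_inv: "beq x x' \<Longrightarrow> kt x = kt x'"
  unfolding k_BH_def using LR_inv by simp

lemma Ev_inv: "beq x x' \<Longrightarrow> Ev x = Ev x'"
  unfolding Ev_def using loads_inv by simp

lemma kp_inv: "beq x x' \<Longrightarrow> kp x = kp x'"
  unfolding k_plus_def using loads_inv LR_inv kt_inv by simp

lemma FDP_inv: "beq x x' \<Longrightarrow> FDP_BH q N H0 x = FDP_BH q N H0 x'"
  unfolding FDP_BH_def using LR_inv kt_inv by simp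

lemma inlow_mono: "inlow K s \<Longrightarrow> K \<le> i \<Longrightarrow> inlow i s"
proof -
  assume a: "inlow K s" "K \<le> i"
  have "real K * q \<le> real i * q" using a(2) qpos by (simp add: mult_right_mono)
  then show ?thesis using a(1) unfolding inlow_def by linarith
qed

lemma inlow_lt_q: assumes "K \<le> N" "inlow K s" shows "s < q"
proof -
  have "real K * q \<le> real N * q" using assms(1) qpos by (simp add: mult_right_mono)
  then have "s * real N < q * real N" using assms(2) unfolding inlow_def by (simp add: mult.commute)
  then show ?thesis using Npos by simp
qed

lemma inlow_notlast: "K \<le> N \<Longrightarrow> inlow K s \<Longrightarrow> \<not> in_bin q N (N + 1) s"
  using inlow_lt_q unfolding in_bin_def by force

lemma inlow_0: "1 \<le> K \<Longrightarrow> inlow K 0"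
  unfolding inlow_def using qpos by simp

lemma inlow_pos: "inlow K s \<Longrightarrow> 1 \<le> K"
proof (rule ccontr)
  assume "inlow K s" "\<not> 1 \<le> K"
  then have "K = 0" "inlow K s" by auto
  then have "0 \<le> s" "s * real N < 0" unfolding inlow_def by auto
  then show False using Npos by (meson mult_nonneg_nonneg not_less of_nat_0_le_iff)
qed

lemma set_upd_eq: "P (x j) = P t \<Longrightarrow> {i \<in> T. P ((x(j := t)) i)} = {i \<in> T. P (x i)}"
  by auto

lemma LOO_LR: assumes "K \<le> N" "inlow K (x j)" "inlow K t" "finite T" "K \<le> i" "i \<le> N"
  shows "LR T (x(j := t)) i = LR T x i"
proof -
  have "inlow i (x j) = inlow i t" using assms inlow_mono by blast
  then have "{i' \<in> T. inlow i ((x(j := t)) i')} = {i' \<in> T. inlow i (x i')}" by (rule set_upd_eq)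
  then show ?thesis unfolding LR_inlow[OF assms(4,6)] by simp
qed

lemma LOO_load: assumes "K \<le> N" "inlow K (x j)" "inlow K t"
  shows "load q N T (x(j := t)) (N + 1) = load q N T x (N + 1)"
proof -
  have "in_bin q N (N + 1) (x j) = in_bin q N (N + 1) t" using assms inlow_notlast by blast
  then have "{i' \<in> T. in_bin q N (N + 1) ((x(j := t)) i')} = {i' \<in> T. in_bin q N (N + 1) (x i')}" by (rule set_upd_eq)
  then show ?thesis unfolding load_def by simp
qed

lemma LOO_kp: assumes "Ev x" "K = kp x" "inlow K (x j)" "inlow K t"
  shows "Ev (x(j := t)) \<and> kp (x(j := t)) = K"
proof -
  let ?x = "x(j := t)"
  have P: "c \<le> K \<and> K \<le> N \<and> LR {1..N} x K = K - c \<and>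
         (\<forall>i. c \<le> i \<longrightarrow> i \<le> N \<longrightarrow> LR {1..N} x i = i - c \<longrightarrow> i \<le> K)"
    using kp_props[OF assms(1)] assms(2) by simp
  have Ev': "Ev ?x" using assms(1) LOO_load[of K x j t H0] P assms(3,4) unfolding Ev_def by simp
  have P': "c \<le> kp ?x \<and> kp ?x \<le> N \<and> LR {1..N} ?x (kp ?x) = kp ?x - c \<and>
         (\<forall>i. c \<le> i \<longrightarrow> i \<le> N \<longrightarrow> LR {1..N} ?x i = i - c \<longrightarrow> i \<le> kp ?x)"
    using kp_props[OF Ev'] by simp
  have eqLR: "LR {1..N} ?x i = LR {1..N} x i" if "K \<le> i" "i \<le> N" for i
    using LOO_LR[of K x j t "{1..N}" i] P assms(3,4) that by simp
  have "K \<le> kp ?x" using P P' eqLR[of K] by auto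
  moreover have "kp ?x \<le> K" using P P' eqLR[of "kp ?x"] calculation by auto
  ultimately show ?thesis using Ev' by simp
qed

lemma LOO_kt: assumes "K = kt x" "inlow K (x j)" "inlow K t"
  shows "kt (x(j := t)) = K"
proof -
  let ?x = "x(j := t)"
  have P: "K \<le> N \<and> LR {1..N} x K = K \<and> (\<forall>i. i \<le> N \<longrightarrow> LR {1..N} x i = i \<longrightarrow> i \<le> K)"
    using kt_props[of x] assms(1) by simp
  have P': "kt ?x \<le> N \<and> LR {1..N} ?x (kt ?x) = kt ?x \<and> (\<forall>i. i \<le> N \<longrightarrow> LR {1..N} ?x i = i \<longrightarrow> i \<le> kt ?x)"
    using kt_props[of ?x] by simp
  have eqLR: "LR {1..N} ?x i = LR {1..N} x i" if "K \<le> i" "i \<le> N" for i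
    using LOO_LR[of K x j t "{1..N}" i] P assms(2,3) that by simp
  have "K \<le> kt ?x" using P P' eqLR[of K] by auto
  moreover have "kt ?x \<le> K" using P P' eqLR[of "kt ?x"] calculation by auto
  ultimately show ?thesis by simp
qed


lemma incr_FDP: assumes inc: "is_increase q N H0 c x y"
  shows "FDP_BH q N H0 y = (if Ev x then (real (LR H0 x (kp x)) + real c) / real (kp x) else FDP_BH q N H0 x)"
proof (cases "Ev x")
  case False
  then have "\<forall>j\<in>{1..N}. y j = x j" using inc unfolding is_increase_def Ev_def by simp
  then have "beq y x" by (intro beq_eqon) auto
  then show ?thesis using False FDP_inv by simp
next
  case True
  define K where "K = kp x"
  have P: "c \<le> K \<and> K \<le> N \<and> LR {1..N} x K = K - c \<and>
         (\<forall>i. c \<le> i \<longrightarrow> i \<le> N \<longrightarrow> LR {1..N} x i = i - c \<longrightarrow> i \<le> K)"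
    using kp_props[OF True] unfolding K_def by simp
  obtain S where S: "S \<subseteq> {j \<in> H0. in_bin q N (N + 1) (x j)}" "card S = c"
     "\<forall>j\<in>S. in_bin q N K (y j)" "\<forall>j\<in>{1..N} - S. y j = x j"
    using inc True unfolding is_increase_def Ev_def K_def by auto
  have K1: "1 \<le> K" using P c1 by simp
  have finS: "finite S" using S(1) H0sub finite_subset[of S "{1..N}"] by auto
  have xS: "\<not> inlow i (x j)" if "j \<in> S" "i \<le> N" for i j
  proof
    assume "inlow i (x j)"
    then have "x j < q" using inlow_lt_q that by blast
    moreover have "q \<le> x j" using S(1) that unfolding in_bin_def by auto
    ultimately show False by simp
  qed
  have yS: "inlow i (y j) = (K \<le> i)" if "j \<in> S" for i j
  proof -
    have "K \<noteq> N + 1" using P by simp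
    then have b: "(real K - 1) * q \<le> y j * real N" "y j * real N < real K * q"
      using S(3) that P by (auto simp: in_bin_iff)
    have "0 \<le> (real K - 1) * q" using K1 qpos by simp
    then have y0: "0 \<le> y j" using b(1) Npos by (meson order_trans zero_le_mult_iff not_less of_nat_0_less_iff)
    show ?thesis
    proof
      assume "inlow i (y j)"
      then have "y j * real N < real i * q" unfolding inlow_def by simp
      then have "(real K - 1) * q < real i * q" using b(1) by linarith
      then have "real K - 1 < real i" using qpos by simp
      then show "K \<le> i" by linarith
    next
      assume "K \<le> i"
      then have "real K * q \<le> real i * q" using qpos by (simp add: mult_right_mono)
      then show "inlow i (y j)" unfolding inlow_def using y0 b(2) by linarith
    qed
  qed
  have key: "LR T y i = LR T x i + (if K \<le> i then c else 0)" if T: "S \<subseteq> T" "T \<subseteq> {1..N}" "i \<le> N" for T i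
  proof -
    have fT: "finite T" using T finite_subset by blast
    define A where "A = {j \<in> T - S. inlow i (x j)}"
    have ex: "{j \<in> T. inlow i (x j)} = A" unfolding A_def using xS T(3) by auto
    have yy: "inlow i (y j) = (if j \<in> S then K \<le> i else inlow i (x j))" if "j \<in> T" for j
      using yS S(4) T that by auto
    have ey: "{j \<in> T. inlow i (y j)} = A \<union> (if K \<le> i then S else {})"
      unfolding A_def using yy T by (auto split: if_splits)
    have fA: "finite A" unfolding A_def using fT by simp
    have dA: "A \<inter> (if K \<le> i then S else {}) = {}" unfolding A_def by auto
    show ?thesis unfolding LR_inlow[OF fT T(3)] ex ey card_Un_disjoint[OF fA _ dA]
      using finS S(2) by (auto simp: card_Un_disjoint[OF fA _ dA])
  qed
  have SH0: "S \<subseteq> H0" using S(1) by auto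
  have keyN: "LR {1..N} y i = LR {1..N} x i + (if K \<le> i then c else 0)" if "i \<le> N" for i
    using key[of "{1..N}" i] that SH0 H0sub by auto
  have keyH: "LR H0 y i = LR H0 x i + (if K \<le> i then c else 0)" if "i \<le> N" for i
    using key[of H0 i] that SH0 H0sub by auto
  have Q: "kt y \<le> N \<and> LR {1..N} y (kt y) = kt y \<and> (\<forall>i. i \<le> N \<longrightarrow> LR {1..N} y i = i \<longrightarrow> i \<le> kt y)"
    using kt_props[of y] by simp
  have "LR {1..N} y K = K" using keyN[of K] P by simp
  then have "K \<le> kt y" using Q P by auto
  moreover have "kt y \<le> K"
  proof (rule ccontr)
    assume "\<not> kt y \<le> K"
    then have "LR {1..N} x (kt y) = kt y - c" "c \<le> kt y" using keyN[of "kt y"] Q P by auto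
    then have "kt y \<le> K" using P Q by blast
    then show False using \<open>\<not> kt y \<le> K\<close> by simp
  qed
  ultimately have kty: "kt y = K" by simp
  have "FDP_BH q N H0 y = real (LR H0 y K) / real (max K 1)" unfolding FDP_BH_def kty ..
  also have "\<dots> = (real (LR H0 x K) + real c) / real K" using keyH[of K] P K1 by (simp add: max_def)
  finally show ?thesis using True K_def by simp
qed


definition a :: "nat \<Rightarrow> (nat \<Rightarrow> real) \<Rightarrow> real" where
  "a j x = (if Ev x \<and> inlow (kp x) (x j) then 1 / real (kp x) else 0)"
definition b :: "nat \<Rightarrow> (nat \<Rightarrow> real) \<Rightarrow> real" where
  "b j x = (if Ev x \<and> inlow (kt x) (x j) then 1 / real (kt x) else 0)"
definition wa :: "nat \<Rightarrow> (nat \<Rightarrow> real) \<Rightarrow> real" where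
  "wa k y = (if Ev y \<and> kp y = k then 1 / real k else 0)"
definition wb :: "nat \<Rightarrow> (nat \<Rightarrow> real) \<Rightarrow> real" where
  "wb k y = (if Ev y \<and> kt y = k then 1 / real k else 0)"
definition ind :: "nat \<Rightarrow> real \<Rightarrow> real" where
  "ind k t = (if inlow k t then 1 else 0)"
definition Dl :: "(nat \<Rightarrow> real) \<Rightarrow> real" where
  "Dl x = (if Ev x then real c / real (kp x) else 0)"

lemma sum_if_const: "finite A \<Longrightarrow> (\<Sum>j\<in>A. if P j then v else 0) = real (card {j \<in> A. P j}) * (v::real)"
  by (simp add: sum.inter_filter[symmetric])

lemma pw_main: assumes "is_increase q N H0 c x y"
  shows "FDP_BH q N H0 y = FDP_BH q N H0 x + Dl x + (\<Sum>j\<in>H0. a j x) - (\<Sum>j\<in>H0. b j x)"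
proof (cases "Ev x")
  case False
  then show ?thesis using incr_FDP[OF assms] unfolding a_def b_def Dl_def by simp
next
  case True
  have fH: "finite H0" using H0sub finite_subset by blast
  define K where "K = kp x"
  have P: "c \<le> K" "K \<le> N" using kp_props[OF True] unfolding K_def by auto
  have sa: "(\<Sum>j\<in>H0. a j x) = real (LR H0 x K) / real K"
    unfolding a_def K_def[symmetric] using True
    by (simp add: sum_if_const[OF fH] LR_inlow[OF fH P(2)])
  have sb: "(\<Sum>j\<in>H0. b j x) = FDP_BH q N H0 x"
  proof (cases "kt x = 0")
    case True
    have "{j \<in> H0. inlow 0 (x j)} = {}" using inlow_pos by fastforce
    then show ?thesis unfolding b_def FDP_BH_def True by (simp add: LR_0)
  next
    case False
    have "kt x \<le> N" using kt_props[of x] by simp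
    then show ?thesis unfolding b_def FDP_BH_def using \<open>Ev x\<close> False
      by (simp add: sum_if_const[OF fH] LR_inlow[OF fH] max_def)
  qed
  show ?thesis unfolding incr_FDP[OF assms] sa sb Dl_def using True
    by (simp add: K_def add_divide_distrib)
qed

lemma a_dec: assumes "j \<in> {1..N}"
  shows "a j x = (\<Sum>k\<in>{1..N}. ind k (x j) * wa k (x(j := 0)))"
proof -
  let ?y = "x(j := 0)"
  have fw: "Ev ?y \<and> kp ?y = kp x" if "Ev x" "inlow (kp x) (x j)"
    using LOO_kp[OF that(1) refl that(2) inlow_0] kp_props[OF that(1)] c1 by simp
  have bw: "Ev x \<and> kp x = kp ?y" if "Ev ?y" "inlow (kp ?y) (x j)"
  proof -
    have "inlow (kp ?y) (?y j)" using inlow_0 kp_props[OF that(1)] c1 by simp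
    have e: "?y(j := x j) = x" by (rule ext) simp
    from LOO_kp[OF that(1) refl \<open>inlow (kp ?y) (?y j)\<close> that(2)] show ?thesis unfolding e by simp
  qed
  have "(\<Sum>k\<in>{1..N}. ind k (x j) * wa k ?y) =
        (\<Sum>k\<in>{1..N}. if k = kp ?y then (if Ev ?y \<and> inlow k (x j) then 1 / real k else 0) else 0)"
    by (rule sum.cong) (auto simp: ind_def wa_def)
  also have "\<dots> = (if kp ?y \<in> {1..N} then (if Ev ?y \<and> inlow (kp ?y) (x j) then 1 / real (kp ?y) else 0) else 0)"
    by (rule sum.delta) simp
  also have "\<dots> = a j x"
  proof (cases "Ev ?y \<and> inlow (kp ?y) (x j)")
    case True
    then have "kp ?y \<in> {1..N}" using kp_props[of ?y] c1 by auto
    then show ?thesis using True bw unfolding a_def by auto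
  next
    case False
    then show ?thesis using fw unfolding a_def by auto
  qed
  finally show ?thesis ..
qed

lemma b_dec: assumes "j \<in> {1..N}"
  shows "b j x = (\<Sum>k\<in>{1..N}. ind k (x j) * wb k (x(j := 0)))"
proof -
  let ?y = "x(j := 0)"
  have fw: "Ev ?y \<and> kt ?y = kt x" if "Ev x" "inlow (kt x) (x j)"
  proof -
    have K: "1 \<le> kt x" "kt x \<le> N" using inlow_pos[OF that(2)] kt_props[of x] by auto
    have "inlow (kt x) 0" using inlow_0 K by simp
    then have "kt ?y = kt x" using LOO_kt[OF refl that(2)] by simp
    moreover have "Ev ?y" using that(1) LOO_load[of "kt x" x j 0 H0] K(2) that(2) \<open>inlow (kt x) 0\<close>
      unfolding Ev_def by simp
    ultimately show ?thesis by simp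
  qed
  have bw: "Ev x \<and> kt x = kt ?y" if "Ev ?y" "inlow (kt ?y) (x j)"
  proof -
    have K: "1 \<le> kt ?y" "kt ?y \<le> N" using inlow_pos[OF that(2)] kt_props[of ?y] by auto
    have i0: "inlow (kt ?y) (?y j)" using inlow_0 K by simp
    have "kt (?y(j := x j)) = kt ?y" using LOO_kt[OF refl i0 that(2)] .
    moreover have "Ev (?y(j := x j))" using that(1) LOO_load[of "kt ?y" ?y j "x j" H0] K(2) i0 that(2)
      unfolding Ev_def by simp
    moreover have e: "?y(j := x j) = x" by (rule ext) simp
    ultimately show ?thesis by simp
  qed
  have "(\<Sum>k\<in>{1..N}. ind k (x j) * wb k ?y) =
        (\<Sum>k\<in>{1..N}. if k = kt ?y then (if Ev ?y \<and> inlow k (x j) then 1 / real k else 0) else 0)"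
    by (rule sum.cong) (auto simp: ind_def wb_def)
  also have "\<dots> = (if kt ?y \<in> {1..N} then (if Ev ?y \<and> inlow (kt ?y) (x j) then 1 / real (kt ?y) else 0) else 0)"
    by (rule sum.delta) simp
  also have "\<dots> = b j x"
  proof (cases "Ev ?y \<and> inlow (kt ?y) (x j)")
    case True
    then have "kt ?y \<in> {1..N}" using kt_props[of ?y] inlow_pos by auto
    then show ?thesis using True bw unfolding b_def by auto
  next
    case False
    then show ?thesis using fw unfolding b_def by auto
  qed
  finally show ?thesis ..
qed

lemma sum_wa: "(\<Sum>k\<in>{1..N}. (real k * q / real N) * wa k y) = (if Ev y then q / real N else 0)"
proof -
  have "(\<Sum>k\<in>{1..N}. (real k * q / real N) * wa k y) =
        (\<Sum>k\<in>{1..N}. if k = kp y then (if Ev y then (real k * q / real N) * (1 / real k) else 0) else 0)"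
    by (rule sum.cong) (auto simp: wa_def)
  also have "\<dots> = (if kp y \<in> {1..N} then (if Ev y then (real (kp y) * q / real N) * (1 / real (kp y)) else 0) else 0)"
    by (rule sum.delta) simp
  also have "\<dots> = (if Ev y then q / real N else 0)"
    using kp_props[of y] c1 by auto
  finally show ?thesis .
qed

lemma sum_wb: assumes "j \<in> {1..N}" "y j = 0"
  shows "(\<Sum>k\<in>{1..N}. (real k * q / real N) * wb k y) = (if Ev y then q / real N else 0)"
proof -
  have "in_bin q N 1 (y j)" using assms qpos Npos N1 unfolding in_bin_def by auto
  then have k1: "1 \<le> kt y" using kt_pos[OF assms(1)] by simp
  have "(\<Sum>k\<in>{1..N}. (real k * q / real N) * wb k y) =
        (\<Sum>k\<in>{1..N}. if k = kt y then (if Ev y then (real k * q / real N) * (1 / real k) else 0) else 0)"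
    by (rule sum.cong) (auto simp: wb_def)
  also have "\<dots> = (if kt y \<in> {1..N} then (if Ev y then (real (kt y) * q / real N) * (1 / real (kt y)) else 0) else 0)"
    by (rule sum.delta) simp
  also have "\<dots> = (if Ev y then q / real N else 0)"
    using kt_props[of y] k1 by auto
  finally show ?thesis .
qed


lemma inlow_inv: assumes "beq x x'" "j \<in> {1..N}" "K \<le> N" shows "inlow K (x j) = inlow K (x' j)"
  using assms unfolding beq_def inlow_bins[OF assms(3), symmetric] by auto

lemma a_inv: assumes "j \<in> {1..N}" "beq x x'" shows "a j x = a j x'"
proof (cases "Ev x")
  case True
  have "kp x \<le> N" using kp_props[OF True] by simp
  then show ?thesis unfolding a_def using inlow_inv[OF assms(2,1)] Ev_inv[OF assms(2)] kp_inv[OF assms(2)]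
    by simp
next
  case False then show ?thesis unfolding a_def using Ev_inv[OF assms(2)] by simp
qed

lemma b_inv: assumes "j \<in> {1..N}" "beq x x'" shows "b j x = b j x'"
proof -
  have "kt x \<le> N" using kt_props[of x] by simp
  then show ?thesis unfolding b_def using inlow_inv[OF assms(2,1)] Ev_inv[OF assms(2)] kt_inv[OF assms(2)]
    by simp
qed

lemma wa_inv: "beq x x' \<Longrightarrow> wa k x = wa k x'"
  unfolding wa_def using Ev_inv kp_inv by simp

lemma wb_inv: "beq x x' \<Longrightarrow> wb k x = wb k x'"
  unfolding wb_def using Ev_inv kt_inv by simp

lemma Dl_inv: "beq x x' \<Longrightarrow> Dl x = Dl x'"
  unfolding Dl_def using Ev_inv kp_inv by simp

lemma a_bound: "\<bar>a j x\<bar> \<le> 1"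
proof -
  have "1 \<le> kp x" if "inlow (kp x) (x j)" using inlow_pos[OF that] .
  then show ?thesis unfolding a_def by auto
qed

lemma b_bound: "\<bar>b j x\<bar> \<le> 1"
proof -
  have "1 \<le> kt x" if "inlow (kt x) (x j)" using inlow_pos[OF that] .
  then show ?thesis unfolding b_def by auto
qed

lemma wa_bound: "\<bar>wa k x\<bar> \<le> 1"
  unfolding wa_def by (cases k) auto

lemma wb_bound: "\<bar>wb k x\<bar> \<le> 1"
  unfolding wb_def by (cases k) auto

lemma ind_bound: "\<bar>ind k t\<bar> \<le> 1"
  unfolding ind_def by auto

lemma Dl_bound: "\<bar>Dl x\<bar> \<le> real c"
proof (cases "Ev x")
  case True
  then have "1 \<le> kp x" using kp_props[OF True] c1 by simp
  then have "real c / real (kp x) \<le> real c / 1"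
    by (intro divide_left_mono) auto
  then show ?thesis unfolding Dl_def using True by simp
qed (simp add: Dl_def)

lemma FDP_bound: "\<bar>FDP_BH q N H0 x\<bar> \<le> real N"
proof -
  have fH: "finite H0" using H0sub finite_subset by blast
  have "LR H0 x (kt x) \<le> card H0" by (rule LR_le_card[OF fH])
  also have "card H0 \<le> N" using card_mono[OF _ H0sub] by simp
  finally have l: "real (LR H0 x (kt x)) \<le> real N" by simp
  have "real (LR H0 x (kt x)) / real (max (kt x) 1) \<le> real (LR H0 x (kt x)) / 1"
    by (intro divide_left_mono) auto
  then show ?thesis unfolding FDP_BH_def using l by simp
qed

end



lemma meas_map_list:
  fixes f :: "nat \<Rightarrow> 'a \<Rightarrow> 'c::countable"
  assumes "\<And>j. j \<in> set js \<Longrightarrow> f j \<in> measurable M (count_space UNIV)"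
  shows "(\<lambda>\<omega>. map (\<lambda>j. f j \<omega>) js) \<in> measurable M (count_space UNIV)"
  using assms
proof (induction js)
  case Nil then show ?case by simp
next
  case (Cons j js)
  have IH: "(\<lambda>\<omega>. map (\<lambda>j. f j \<omega>) js) \<in> measurable M (count_space UNIV)" using Cons by simp
  have fj: "f j \<in> measurable M (count_space UNIV)" using Cons.prems by simp
  show ?case unfolding measurable_count_space_eq2_countable
  proof (intro conjI ballI)
    fix l :: "'c list"
    show "(\<lambda>\<omega>. map (\<lambda>j. f j \<omega>) (j # js)) -` {l} \<inter> space M \<in> sets M"
    proof (cases l)
      case Nil
      then have "(\<lambda>\<omega>. map (\<lambda>j. f j \<omega>) (j # js)) -` {l} \<inter> space M = {}" by auto
      then show ?thesis by simp
    next
      case (Cons a l')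
      have "(\<lambda>\<omega>. map (\<lambda>j. f j \<omega>) (j # js)) -` {l} \<inter> space M =
            (f j -` {a} \<inter> space M) \<inter> ((\<lambda>\<omega>. map (\<lambda>j. f j \<omega>) js) -` {l'} \<inter> space M)"
        using Cons by auto
      moreover have "f j -` {a} \<inter> space M \<in> sets M" using fj by (rule measurable_sets) simp
      moreover have "(\<lambda>\<omega>. map (\<lambda>j. f j \<omega>) js) -` {l'} \<inter> space M \<in> sets M" using IH by (rule measurable_sets) simp
      ultimately show ?thesis by simp
    qed
  qed simp
qed

lemma in_bin_pred: assumes [measurable]: "Q \<in> borel_measurable M"
  shows "(\<lambda>\<omega>. in_bin q N i (Q \<omega>)) \<in> measurable M (count_space UNIV)"
proof (cases "i = N + 1")
  case True
  then show ?thesis unfolding in_bin_def by simp measurable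
next
  case False
  then show ?thesis unfolding in_bin_def by simp measurable
qed

lemma meas_binfun:
  fixes G :: "(nat \<Rightarrow> real) \<Rightarrow> real" and Q :: "nat \<Rightarrow> 'b \<Rightarrow> real"
  assumes inv: "\<And>x x'. (\<forall>j\<in>{1..N}. \<forall>i. in_bin q N i (x j) = in_bin q N i (x' j)) \<Longrightarrow> G x = G x'"
    and meas: "\<And>i. i \<in> {1..N} \<Longrightarrow> Q i \<in> borel_measurable M"
  shows "(\<lambda>\<omega>. G (\<lambda>i. Q i \<omega>)) \<in> borel_measurable M"
proof -
  define key where "key \<omega> = map (\<lambda>j. map (\<lambda>i. in_bin q N i (Q j \<omega>)) [0..<N+2]) [1..<N+1]" for \<omega>
  define rep where "rep l = (\<lambda>j. SOME t. \<forall>i<N+2. in_bin q N i t = (l ! (j - 1)) ! i)" for l :: "bool list list"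
  have km: "key \<in> measurable M (count_space UNIV)"
    unfolding key_def
    by (intro meas_map_list in_bin_pred meas) auto
  have eq: "G (\<lambda>i. Q i \<omega>) = G (rep (key \<omega>))" for \<omega>
  proof (rule inv, intro ballI allI)
    fix j i assume j: "j \<in> {1..N}"
    have k1: "key \<omega> ! (j - 1) = map (\<lambda>i. in_bin q N i (Q j \<omega>)) [0..<N+2]"
    proof -
      have l: "j - 1 < length [1..<N+1]" using j by (simp, linarith)
      have u: "[1..<N+1] ! (j - 1) = j" using j by (subst nth_upt) auto
      show ?thesis unfolding key_def nth_map[OF l] u ..
    qed
    have kj: "(key \<omega> ! (j - 1)) ! i = in_bin q N i (Q j \<omega>)" if "i < N + 2" for i
      unfolding k1 using that by (simp del: upt_Suc add: nth_map)
    have ex: "\<exists>t. \<forall>i<N+2. in_bin q N i t = (key \<omega> ! (j - 1)) ! i" using kj by blast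
    have r: "\<forall>i<N+2. in_bin q N i (rep (key \<omega>) j) = (key \<omega> ! (j - 1)) ! i"
      unfolding rep_def by (rule someI_ex[OF ex])
    show "in_bin q N i (Q j \<omega>) = in_bin q N i (rep (key \<omega>) j)"
    proof (cases "i < N + 2")
      case True then show ?thesis using r kj by simp
    next
      case False then show ?thesis unfolding in_bin_def by auto
    qed
  qed
  have "(\<lambda>\<omega>. (G \<circ> rep) (key \<omega>)) \<in> borel_measurable M"
    by (rule measurable_compose[OF km]) simp
  then show ?thesis unfolding eq by simp
qed


locale bhp = bhs q N H0 c + prob_space M
  for q :: real and N :: nat and H0 :: "nat set" and c :: nat and M :: "'a measure" +
  fixes P :: "nat \<Rightarrow> 'a \<Rightarrow> real"
  assumes indep: "indep_vars (\<lambda>_. borel) P {1..N}"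
    and unif: "\<forall>i\<in>H0. distr M lborel (P i) = uniform_measure lborel {0..1}"
begin

lemma Pm[measurable]: "i \<in> {1..N} \<Longrightarrow> P i \<in> borel_measurable M"
  using indep unfolding indep_vars_def by auto

definition ext :: "nat \<Rightarrow> (nat \<Rightarrow> real) \<Rightarrow> (nat \<Rightarrow> real)" where
  "ext j r = (\<lambda>i. if i \<in> {1..N} - {j} then r i else 0)"

definition Yr :: "nat \<Rightarrow> 'a \<Rightarrow> (nat \<Rightarrow> real)" where
  "Yr j \<omega> = restrict (\<lambda>i. P i \<omega>) ({1..N} - {j})"

lemma ext_Yr: "ext j (Yr j \<omega>) = (\<lambda>i. if i \<in> {1..N} - {j} then P i \<omega> else 0)"
  unfolding ext_def Yr_def by auto

lemma beq_ext: "j \<in> {1..N} \<Longrightarrow> beq ((\<lambda>i. P i \<omega>)(j := 0)) (ext j (Yr j \<omega>))"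
  unfolding ext_Yr by (intro beq_eqon) auto

lemma binfun: fixes G :: "(nat \<Rightarrow> real) \<Rightarrow> real" assumes "\<And>x x'. beq x x' \<Longrightarrow> G x = G x'"
  shows "(\<lambda>\<omega>. G (\<lambda>i. P i \<omega>)) \<in> borel_measurable M"
  by (rule meas_binfun[where q=q and N=N]) (use assms Pm in \<open>auto simp: beq_def\<close>)

lemma binfun_ext: fixes G :: "(nat \<Rightarrow> real) \<Rightarrow> real" assumes "\<And>x x'. beq x x' \<Longrightarrow> G x = G x'"
  shows "(\<lambda>\<omega>. G (ext j (Yr j \<omega>))) \<in> borel_measurable M"
proof -
  have "(\<lambda>\<omega>. G (\<lambda>i. if i \<in> {1..N} - {j} then P i \<omega> else 0)) \<in> borel_measurable M"
    by (rule meas_binfun[where q=q and N=N]) (use assms in \<open>auto simp: beq_def\<close>)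
  then show ?thesis unfolding ext_Yr .
qed

lemma ind_meas[measurable]: "ind k \<in> borel_measurable borel"
  unfolding ind_def inlow_def by measurable

lemma indep_pair: fixes G :: "(nat \<Rightarrow> real) \<Rightarrow> real" and f :: "real \<Rightarrow> real" assumes j: "j \<in> {1..N}" and f[measurable]: "f \<in> borel_measurable borel"
  and G: "\<And>x x'. beq x x' \<Longrightarrow> G x = G x'"
  shows "indep_var borel (\<lambda>\<omega>. f (P j \<omega>)) borel (\<lambda>\<omega>. G (ext j (Yr j \<omega>)))"
proof -
  have iv: "indep_var (PiM {j} (\<lambda>_. borel)) (\<lambda>\<omega>. restrict (\<lambda>i. P i \<omega>) {j})
                     (PiM ({1..N} - {j}) (\<lambda>_. borel)) (\<lambda>\<omega>. restrict (\<lambda>i. P i \<omega>) ({1..N} - {j}))"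
    by (rule indep_var_restrict[OF indep]) (use j in auto)
  have m1: "(\<lambda>v. f (v j)) \<in> borel_measurable (PiM {j} (\<lambda>_. borel))" by measurable
  have m2: "(\<lambda>r. G (ext j r)) \<in> borel_measurable (PiM ({1..N} - {j}) (\<lambda>_. borel))"
  proof -
    have Qm: "(\<lambda>r. if i \<in> {1..N} - {j} then r i else 0) \<in> borel_measurable (PiM ({1..N} - {j}) (\<lambda>_. borel))" for i
      by (cases "i \<in> {1..N} - {j}") auto
    have "(\<lambda>r. G (\<lambda>i. if i \<in> {1..N} - {j} then r i else 0)) \<in> borel_measurable (PiM ({1..N} - {j}) (\<lambda>_. borel))"
      by (rule meas_binfun[where q=q and N=N and G=G and Q="\<lambda>i r. if i \<in> {1..N} - {j} then r i else 0"])
         (rule G, simp add: beq_def, rule Qm)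
    then show ?thesis unfolding ext_def .
  qed
  have "indep_var borel ((\<lambda>v. f (v j)) \<circ> (\<lambda>\<omega>. restrict (\<lambda>i. P i \<omega>) {j}))
                  borel ((\<lambda>r. G (ext j r)) \<circ> (\<lambda>\<omega>. restrict (\<lambda>i. P i \<omega>) ({1..N} - {j})))"
    by (rule indep_var_compose[OF iv m1 m2])
  moreover have "((\<lambda>v. f (v j)) \<circ> (\<lambda>\<omega>. restrict (\<lambda>i. P i \<omega>) {j})) = (\<lambda>\<omega>. f (P j \<omega>))"
    by (auto simp: fun_eq_iff)
  moreover have "((\<lambda>r. G (ext j r)) \<circ> (\<lambda>\<omega>. restrict (\<lambda>i. P i \<omega>) ({1..N} - {j}))) = (\<lambda>\<omega>. G (ext j (Yr j \<omega>)))"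
    by (auto simp: fun_eq_iff Yr_def)
  ultimately show ?thesis by simp
qed

lemma ind_int: assumes j: "j \<in> H0" and k: "k \<le> N"
  shows "(\<integral>\<omega>. ind k (P j \<omega>) \<partial>M) = real k * q / real N"
proof -
  define r where "r = real k * q / real N"
  have r0: "0 \<le> r" unfolding r_def using qpos by simp
  have "real k * q \<le> real N * q" using k qpos by (simp add: mult_right_mono)
  then have "r \<le> q" unfolding r_def using Npos by (simp add: divide_le_eq mult.commute)
  then have r1: "r \<le> 1" using qlt1 by simp
  have indr: "ind k t = indicator {0..<r} t" for t
    unfolding ind_def inlow_def r_def indicator_def using Npos by (auto simp: less_divide_eq)
  have jN: "j \<in> {1..N}" using j H0sub by auto
  have "(\<integral>\<omega>. ind k (P j \<omega>) \<partial>M) = (\<integral>t. indicator {0..<r} t \<partial>(distr M lborel (P j)))"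
    unfolding indr by (rule integral_distr[symmetric]) (use jN in auto)
  also have "\<dots> = (\<integral>t. indicator {0..<r} t \<partial>(uniform_measure lborel {0..1}))"
    using unif j by simp
  also have "\<dots> = measure (uniform_measure lborel {0..1}) {0..<r}"
    by simp
  also have "\<dots> = measure lborel ({0..1} \<inter> {0..<r}) / measure lborel {0..1::real}"
    by (rule measure_uniform_measure) auto
  also have "{0..1} \<inter> {0..<r} = {0..<r}" using r1 by auto
  finally show ?thesis using r0 unfolding r_def by simp
qed


lemma sep: fixes W :: "nat \<Rightarrow> (nat \<Rightarrow> real) \<Rightarrow> real"
  assumes j: "j \<in> H0" and Winv: "\<And>k x x'. beq x x' \<Longrightarrow> W k x = W k x'"
    and Wb: "\<And>k y. \<bar>W k y\<bar> \<le> 1"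
  shows "(\<integral>\<omega>. (\<Sum>k\<in>{1..N}. ind k (P j \<omega>) * W k (ext j (Yr j \<omega>))) \<partial>M) =
         (\<integral>\<omega>. (\<Sum>k\<in>{1..N}. (real k * q / real N) * W k (ext j (Yr j \<omega>))) \<partial>M)"
proof -
  have jN: "j \<in> {1..N}" using j H0sub by auto
  have Wm: "(\<lambda>\<omega>. W k (ext j (Yr j \<omega>))) \<in> borel_measurable M" for k
    by (rule binfun_ext) (rule Winv)
  have Wi: "integrable M (\<lambda>\<omega>. W k (ext j (Yr j \<omega>)))" for k
    by (rule integrable_const_bound[where B=1]) (use Wb Wm in auto)
  have Im: "(\<lambda>\<omega>. ind k (P j \<omega>)) \<in> borel_measurable M" for k
    using jN by measurable
  have Ii: "integrable M (\<lambda>\<omega>. ind k (P j \<omega>))" for k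
    by (rule integrable_const_bound[where B=1]) (use ind_bound Im in auto)
  have iv: "indep_var borel (\<lambda>\<omega>. ind k (P j \<omega>)) borel (\<lambda>\<omega>. W k (ext j (Yr j \<omega>)))" for k
    by (rule indep_pair[OF jN ind_meas]) (rule Winv)
  have prodi: "integrable M (\<lambda>\<omega>. ind k (P j \<omega>) * W k (ext j (Yr j \<omega>)))" for k
    by (rule indep_var_integrable[OF iv Ii Wi])
  have prod: "(\<integral>\<omega>. ind k (P j \<omega>) * W k (ext j (Yr j \<omega>)) \<partial>M) =
              (\<integral>\<omega>. (real k * q / real N) * W k (ext j (Yr j \<omega>)) \<partial>M)" if "k \<in> {1..N}" for k
  proof -
    have "(\<integral>\<omega>. ind k (P j \<omega>) * W k (ext j (Yr j \<omega>)) \<partial>M) =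
          (\<integral>\<omega>. ind k (P j \<omega>) \<partial>M) * (\<integral>\<omega>. W k (ext j (Yr j \<omega>)) \<partial>M)"
      by (rule indep_var_lebesgue_integral[OF iv Ii Wi])
    also have "\<dots> = (real k * q / real N) * (\<integral>\<omega>. W k (ext j (Yr j \<omega>)) \<partial>M)"
      using ind_int[OF j] that by simp
    finally show ?thesis by simp
  qed
  have "(\<integral>\<omega>. (\<Sum>k\<in>{1..N}. ind k (P j \<omega>) * W k (ext j (Yr j \<omega>))) \<partial>M) =
        (\<Sum>k\<in>{1..N}. (\<integral>\<omega>. ind k (P j \<omega>) * W k (ext j (Yr j \<omega>)) \<partial>M))"
    by (rule Bochner_Integration.integral_sum[where I="{1..N}" and M=M and f="\<lambda>k \<omega>. ind k (P j \<omega>) * W k (ext j (Yr j \<omega>))"]) (rule prodi)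
  also have "\<dots> = (\<Sum>k\<in>{1..N}. (\<integral>\<omega>. (real k * q / real N) * W k (ext j (Yr j \<omega>)) \<partial>M))"
    by (rule sum.cong) (auto simp: prod)
  also have "\<dots> = (\<integral>\<omega>. (\<Sum>k\<in>{1..N}. (real k * q / real N) * W k (ext j (Yr j \<omega>))) \<partial>M)"
    by (rule Bochner_Integration.integral_sum[where I="{1..N}" and M=M and f="\<lambda>k \<omega>. (real k * q / real N) * W k (ext j (Yr j \<omega>))", symmetric]) (use Wi in auto)
  finally show ?thesis .
qed

lemma a_int: assumes j: "j \<in> H0"
  shows "(\<integral>\<omega>. a j (\<lambda>i. P i \<omega>) \<partial>M) = (\<integral>\<omega>. (if Ev (ext j (Yr j \<omega>)) then q / real N else 0) \<partial>M)"
proof -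
  have jN: "j \<in> {1..N}" using j H0sub by auto
  have "a j (\<lambda>i. P i \<omega>) = (\<Sum>k\<in>{1..N}. ind k (P j \<omega>) * wa k (ext j (Yr j \<omega>)))" for \<omega>
    unfolding a_dec[OF jN] using wa_inv[OF beq_ext[OF jN]] by simp
  then have "(\<integral>\<omega>. a j (\<lambda>i. P i \<omega>) \<partial>M) = (\<integral>\<omega>. (\<Sum>k\<in>{1..N}. ind k (P j \<omega>) * wa k (ext j (Yr j \<omega>))) \<partial>M)"
    by simp
  also have "\<dots> = (\<integral>\<omega>. (\<Sum>k\<in>{1..N}. (real k * q / real N) * wa k (ext j (Yr j \<omega>))) \<partial>M)"
    by (rule sep[OF j]) (auto intro: wa_inv wa_bound)
  also have "\<dots> = (\<integral>\<omega>. (if Ev (ext j (Yr j \<omega>)) then q / real N else 0) \<partial>M)"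
    unfolding sum_wa ..
  finally show ?thesis .
qed

lemma b_int: assumes j: "j \<in> H0"
  shows "(\<integral>\<omega>. b j (\<lambda>i. P i \<omega>) \<partial>M) = (\<integral>\<omega>. (if Ev (ext j (Yr j \<omega>)) then q / real N else 0) \<partial>M)"
proof -
  have jN: "j \<in> {1..N}" using j H0sub by auto
  have "b j (\<lambda>i. P i \<omega>) = (\<Sum>k\<in>{1..N}. ind k (P j \<omega>) * wb k (ext j (Yr j \<omega>)))" for \<omega>
    unfolding b_dec[OF jN] using wb_inv[OF beq_ext[OF jN]] by simp
  then have "(\<integral>\<omega>. b j (\<lambda>i. P i \<omega>) \<partial>M) = (\<integral>\<omega>. (\<Sum>k\<in>{1..N}. ind k (P j \<omega>) * wb k (ext j (Yr j \<omega>))) \<partial>M)"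
    by simp
  also have "\<dots> = (\<integral>\<omega>. (\<Sum>k\<in>{1..N}. (real k * q / real N) * wb k (ext j (Yr j \<omega>))) \<partial>M)"
    by (rule sep[OF j]) (auto intro: wb_inv wb_bound)
  also have "\<dots> = (\<integral>\<omega>. (if Ev (ext j (Yr j \<omega>)) then q / real N else 0) \<partial>M)"
  proof -
    have "ext j (Yr j \<omega>) j = 0" for \<omega> unfolding ext_def by simp
    then show ?thesis using sum_wb[OF jN] by simp
  qed
  finally show ?thesis .
qed

lemma main: assumes inc: "\<forall>x. is_increase q N H0 c x (incr x)"
  shows "(\<integral>\<omega>. FDP_BH q N H0 (incr (\<lambda>i. P i \<omega>)) \<partial>M) =
         (\<integral>\<omega>. FDP_BH q N H0 (\<lambda>i. P i \<omega>) \<partial>M) + (\<integral>\<omega>. Dl (\<lambda>i. P i \<omega>) \<partial>M)"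
proof -
  have fH: "finite H0" using H0sub finite_subset by blast
  have iF: "integrable M (\<lambda>\<omega>. FDP_BH q N H0 (\<lambda>i. P i \<omega>))"
    by (rule integrable_const_bound[where B="real N"]) (use FDP_bound binfun[OF FDP_inv] in auto)
  have iD: "integrable M (\<lambda>\<omega>. Dl (\<lambda>i. P i \<omega>))"
    by (rule integrable_const_bound[where B="real c"]) (use Dl_bound binfun[OF Dl_inv] in auto)
  have ia: "integrable M (\<lambda>\<omega>. a j (\<lambda>i. P i \<omega>))" if "j \<in> H0" for j
  proof -
    have jN: "j \<in> {1..N}" using that H0sub by auto
    show ?thesis
      by (rule integrable_const_bound[where B=1]) (use a_bound binfun[OF a_inv[OF jN]] in auto)
  qed
  have ib: "integrable M (\<lambda>\<omega>. b j (\<lambda>i. P i \<omega>))" if "j \<in> H0" for j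
  proof -
    have jN: "j \<in> {1..N}" using that H0sub by auto
    show ?thesis
      by (rule integrable_const_bound[where B=1]) (use b_bound binfun[OF b_inv[OF jN]] in auto)
  qed
  have isa: "integrable M (\<lambda>\<omega>. \<Sum>j\<in>H0. a j (\<lambda>i. P i \<omega>))" using ia by auto
  have isb: "integrable M (\<lambda>\<omega>. \<Sum>j\<in>H0. b j (\<lambda>i. P i \<omega>))" using ib by auto
  have "(\<integral>\<omega>. FDP_BH q N H0 (incr (\<lambda>i. P i \<omega>)) \<partial>M) =
        (\<integral>\<omega>. (FDP_BH q N H0 (\<lambda>i. P i \<omega>) + Dl (\<lambda>i. P i \<omega>) + (\<Sum>j\<in>H0. a j (\<lambda>i. P i \<omega>))) -
               (\<Sum>j\<in>H0. b j (\<lambda>i. P i \<omega>)) \<partial>M)"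
  proof -
    have "FDP_BH q N H0 (incr (\<lambda>i. P i \<omega>)) = FDP_BH q N H0 (\<lambda>i. P i \<omega>) + Dl (\<lambda>i. P i \<omega>) +
       (\<Sum>j\<in>H0. a j (\<lambda>i. P i \<omega>)) - (\<Sum>j\<in>H0. b j (\<lambda>i. P i \<omega>))" for \<omega>
      using pw_main inc by blast
    then show ?thesis by simp
  qed
  also have "\<dots> = (\<integral>\<omega>. FDP_BH q N H0 (\<lambda>i. P i \<omega>) \<partial>M) + (\<integral>\<omega>. Dl (\<lambda>i. P i \<omega>) \<partial>M) +
        (\<Sum>j\<in>H0. (\<integral>\<omega>. a j (\<lambda>i. P i \<omega>) \<partial>M)) - (\<Sum>j\<in>H0. (\<integral>\<omega>. b j (\<lambda>i. P i \<omega>) \<partial>M))"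
    using iF iD isa isb ia ib by (simp add: Bochner_Integration.integral_sum)
  also have "(\<Sum>j\<in>H0. (\<integral>\<omega>. a j (\<lambda>i. P i \<omega>) \<partial>M)) = (\<Sum>j\<in>H0. (\<integral>\<omega>. b j (\<lambda>i. P i \<omega>) \<partial>M))"
    by (rule sum.cong) (auto simp: a_int b_int)
  finally show ?thesis by simp
qed

end


theorem theorem2:
  fixes N c :: nat and q :: real and H0 :: "nat set"
    and M :: "'a measure" and P :: "nat \<Rightarrow> 'a \<Rightarrow> real"
    and incr :: "(nat \<Rightarrow> real) \<Rightarrow> (nat \<Rightarrow> real)"
  assumes "N \<ge> 1" and "H0 \<subseteq> {1..N}" and "0 < q" and "q < 1" and "c \<ge> 1"
    and "prob_space M"
    and "prob_space.indep_vars M (\<lambda>_. borel) P {1..N}"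
    and "\<forall>i\<in>H0. distr M lborel (P i) = uniform_measure lborel {0..1}"
    and "\<forall>i\<in>{1..N} - H0. AE \<omega> in M. P i \<omega> \<in> {0..1}"
    and "\<forall>x. is_increase q N H0 c x (incr x)"
  shows "integral\<^sup>L M (\<lambda>\<omega>. FDP_BH q N H0 (incr (\<lambda>i. P i \<omega>))) =
         integral\<^sup>L M (\<lambda>\<omega>. FDP_BH q N H0 (\<lambda>i. P i \<omega>)) +
         integral\<^sup>L M (\<lambda>\<omega>. if load q N H0 (\<lambda>i. P i \<omega>) (N + 1) \<ge> c
                            then real c / real (k_plus q N H0 c (\<lambda>i. P i \<omega>)) else 0)"
proof -
  interpret ps: prob_space M by fact
  interpret bhp q N H0 c M P
    using assms by (simp add: bhp_def bhs_def bhp_axioms_def)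
  have "(\<integral>\<omega>. FDP_BH q N H0 (incr (\<lambda>i. P i \<omega>)) \<partial>M) =
         (\<integral>\<omega>. FDP_BH q N H0 (\<lambda>i. P i \<omega>) \<partial>M) + (\<integral>\<omega>. Dl (\<lambda>i. P i \<omega>) \<partial>M)"
    by (rule main) fact
  then show ?thesis unfolding Dl_def Ev_def by simp
qed

end
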